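(* Let $\alpha>0$, $\eta=\alpha/(L+\alpha)$, $z_0\in\mathrm{dom}\, f^*$, and consider GCG: for $k\ge0$, $\bar z_k=\mathrm{argmin}_{v}\{\langle-\nabla(h^\alpha)^*(-z_k),v\rangle+f^*(v)\}$, $z_{k+1}=\eta\bar z_k+(1-\eta)z_k$. Let $S(z)=\max_{v\in\mathbb{R}^n}\{\langle-\nabla(h^\alpha)^*(-z),z-v\rangle+f^*(z)-f^*(v)\}$. Then for all $k\ge0$, $\psi^\alpha(z_{k+1})\le\psi^\alpha(z_k)-\eta S(z_k)$.
   Context: Let $\|\cdot\|$ be a norm on $\mathbb{R}^n$ with dual norm $\|\cdot\|_*$. Let $f:\mathbb{R}^n\to\mathbb{R}$ be convex, differentiable and $L$-smooth ($L>0$) with respect to $\|\cdot\|$, $h:\mathbb{R}^n\to(-\infty,\infty]$ closed proper convex with bounded domain, and $w:\mathbb{R}^n\to[0,+\infty]$ closed, $1$-strongly convex with respect to $\|\cdot\|$ on $\mathrm{dom}\, h$, with $\max_{\mathrm{dom}\, h}w<\infty$. Let $h^\alpha=h+\alpha w$ and $\psi^\alpha(z)=(h^\alpha)^*(-z)+f^*(z)$, with $^*$ the convex conjugate; $(h^\alpha)^*$ is differentiable with $(1/\alpha)$-Lipschitz gradient w.r.t. $\|\cdot\|_*$ and $f^*$ is $(1/L)$-strongly convex w.r.t. $\|\cdot\|_*$. *)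

theory Defs
  imports "HOL-Analysis.Analysis"
begin

definition is_norm :: "('a::euclidean_space \<Rightarrow> real) \<Rightarrow> bool" where
  "is_norm N \<longleftrightarrow> (\<forall>x. 0 \<le> N x) \<and> (\<forall>x. N x = 0 \<longleftrightarrow> x = 0)
     \<and> (\<forall>c x. N (c *\<^sub>R x) = \<bar>c\<bar> * N x) \<and> (\<forall>x y. N (x + y) \<le> N x + N y)"

definition dual_norm :: "('a::euclidean_space \<Rightarrow> real) \<Rightarrow> 'a \<Rightarrow> real" where
  "dual_norm N z = Sup {z \<bullet> x | x. N x \<le> 1}"

definition conj :: "('a::euclidean_space \<Rightarrow> ereal) \<Rightarrow> 'a \<Rightarrow> ereal" where
  "conj g z = (SUP x. ereal (z \<bullet> x) - g x)"

definition edom :: "('a \<Rightarrow> ereal) \<Rightarrow> 'a set" where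
  "edom g = {x. g x < \<infinity>}"

definition proper_fun :: "('a \<Rightarrow> ereal) \<Rightarrow> bool" where
  "proper_fun g \<longleftrightarrow> (\<forall>x. g x \<noteq> -\<infinity>) \<and> (\<exists>x. g x < \<infinity>)"

definition econvex :: "('a::real_vector \<Rightarrow> ereal) \<Rightarrow> bool" where
  "econvex g \<longleftrightarrow> (\<forall>x y t. 0 \<le> t \<and> t \<le> 1 \<longrightarrow>
      g (t *\<^sub>R x + (1 - t) *\<^sub>R y) \<le> ereal t * g x + ereal (1 - t) * g y)"

definition closed_fun :: "('a::euclidean_space \<Rightarrow> ereal) \<Rightarrow> bool" where
  "closed_fun g \<longleftrightarrow> closed {(x, t::real). g x \<le> ereal t}"

definition strongly_convex_on ::
  "'a set \<Rightarrow> ('a::real_vector \<Rightarrow> real) \<Rightarrow> real \<Rightarrow> ('a \<Rightarrow> ereal) \<Rightarrow> bool" where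
  "strongly_convex_on C N \<mu> g \<longleftrightarrow> (\<forall>x\<in>C. \<forall>y\<in>C. \<forall>t. 0 \<le> t \<and> t \<le> 1 \<longrightarrow>
      g (t *\<^sub>R x + (1 - t) *\<^sub>R y) \<le> ereal t * g x + ereal (1 - t) * g y
        - ereal (\<mu> / 2 * t * (1 - t) * (N (x - y))\<^sup>2))"

end

theory Submission
  imports Defs
begin


lemma norm_lower:
  fixes N :: "'a::euclidean_space \<Rightarrow> real"
  assumes "is_norm N" shows "\<exists>m>0. \<forall>x. m * norm x \<le> N x"
proof -
  have nn: "\<And>x. 0 \<le> N x" and z: "\<And>x. N x = 0 \<longleftrightarrow> x = 0"
    and hom: "\<And>c x. N (c *\<^sub>R x) = \<bar>c\<bar> * N x" and tri: "\<And>x y. N (x + y) \<le> N x + N y"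
    using assms unfolding is_norm_def by auto
  have "convex_on UNIV N"
  proof (rule convex_onI)
    fix x y :: "'a" and t :: real assume "t > 0" "t < 1"
    then show "N ((1 - t) *\<^sub>R x + t *\<^sub>R y) \<le> (1 - t) * N x + t * N y"
      using tri[of "(1 - t) *\<^sub>R x" "t *\<^sub>R y"] hom[of "1-t" x] hom[of t y] by simp
  qed simp
  then have cont: "continuous_on (sphere 0 1) N"
    using convex_on_continuous[of UNIV N] continuous_on_subset by blast
  obtain b :: 'a where b: "b \<in> Basis" using nonempty_Basis by blast
  then have "b \<in> sphere 0 1" by simp
  then obtain x0 where x0: "x0 \<in> sphere 0 1" "\<And>y. y \<in> sphere 0 1 \<Longrightarrow> N x0 \<le> N y"
    using continuous_attains_inf[OF compact_sphere _ cont] by blast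
  have "x0 \<noteq> 0" using x0 by auto
  then have m: "N x0 > 0" using nn[of x0] z[of x0] by linarith
  show ?thesis
  proof (intro exI[of _ "N x0"] conjI allI m)
    fix x :: 'a
    show "N x0 * norm x \<le> N x"
    proof (cases "x = 0")
      case True then show ?thesis using nn by simp
    next
      case False
      then have "(1 / norm x) *\<^sub>R x \<in> sphere 0 1" by simp
      then have "N x0 \<le> N ((1 / norm x) *\<^sub>R x)" by (rule x0(2))
      also have "\<dots> = N x / norm x" using hom by simp
      finally show ?thesis using False by (simp add: field_simps)
    qed
  qed
qed

lemma dual_bdd:
  fixes N :: "'a::euclidean_space \<Rightarrow> real"
  assumes "is_norm N" shows "bdd_above {z \<bullet> x | x. N x \<le> 1}"
proof -
  obtain m where m: "m > 0" "\<And>x. m * norm x \<le> N x" using norm_lower[OF assms] by blast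
  show ?thesis
  proof (rule bdd_aboveI)
    fix r assume "r \<in> {z \<bullet> x | x. N x \<le> 1}"
    then obtain x where x: "r = z \<bullet> x" "N x \<le> 1" by blast
    have "norm x \<le> 1 / m" using m(2)[of x] x(2) m(1) by (simp add: field_simps)
    then have "norm z * norm x \<le> norm z * (1 / m)" by (rule mult_left_mono) simp
    then have "r \<le> norm z * (1 / m)" using x(1) Cauchy_Schwarz_ineq2[of z x] abs_ge_self[of "z \<bullet> x"]
      by linarith
    then show "r \<le> norm z / m" by simp
  qed
qed

lemma dual_upper:
  fixes N :: "'a::euclidean_space \<Rightarrow> real"
  assumes "is_norm N" "N x \<le> 1" shows "z \<bullet> x \<le> dual_norm N z"
  unfolding dual_norm_def using assms by (intro cSup_upper dual_bdd) auto

lemma dual_nonneg: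
  fixes N :: "'a::euclidean_space \<Rightarrow> real"
  assumes "is_norm N" shows "0 \<le> dual_norm N z"
proof -
  have "N 0 = 0" using assms unfolding is_norm_def by auto
  then show ?thesis using dual_upper[OF assms, of 0 z] by simp
qed

lemma dual_ineq:
  fixes N :: "'a::euclidean_space \<Rightarrow> real"
  assumes "is_norm N" shows "a \<bullet> d \<le> N a * dual_norm N d"
proof (cases "a = 0")
  case True
  have "N 0 = 0" using assms unfolding is_norm_def by auto
  then show ?thesis using True by simp
next
  case False
  have nn: "\<And>x. 0 \<le> N x" and z: "\<And>x. N x = 0 \<longleftrightarrow> x = 0"
    and hom: "\<And>c x. N (c *\<^sub>R x) = \<bar>c\<bar> * N x"
    using assms unfolding is_norm_def by auto
  have pos: "N a > 0" using False nn[of a] z[of a] by linarith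
  have "N ((1 / N a) *\<^sub>R a) \<le> 1" using hom pos by simp
  then have "d \<bullet> ((1 / N a) *\<^sub>R a) \<le> dual_norm N d" by (rule dual_upper[OF assms])
  then have "(a \<bullet> d) / N a \<le> dual_norm N d" by (simp add: inner_commute)
  then show ?thesis using pos by (simp add: field_simps)
qed

lemma dual_scale:
  fixes N :: "'a::euclidean_space \<Rightarrow> real"
  assumes "is_norm N" "c \<ge> 0" shows "dual_norm N (c *\<^sub>R u) \<le> c * dual_norm N u"
  unfolding dual_norm_def[of N "c *\<^sub>R u"]
proof (rule cSup_least)
  have "N 0 = 0" using assms unfolding is_norm_def by auto
  then have "c *\<^sub>R u \<bullet> 0 \<in> {c *\<^sub>R u \<bullet> x |x. N x \<le> 1}" by (intro CollectI exI[of _ 0]) simp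
  then show "{c *\<^sub>R u \<bullet> x |x. N x \<le> 1} \<noteq> {}" by (rule ex_in_conv[THEN iffD1, OF exI])
next
  fix r assume "r \<in> {c *\<^sub>R u \<bullet> x |x. N x \<le> 1}"
  then obtain x where x: "r = c * (u \<bullet> x)" "N x \<le> 1" by auto
  have "u \<bullet> x \<le> dual_norm N u" by (rule dual_upper[OF assms(1) x(2)])
  then have "c * (u \<bullet> x) \<le> c * dual_norm N u" by (rule mult_left_mono[OF _ assms(2)])
  then show "r \<le> c * dual_norm N u" using x(1) by simp
qed

lemma dual_neg:
  fixes N :: "'a::euclidean_space \<Rightarrow> real"
  assumes "is_norm N" shows "dual_norm N (- u) = dual_norm N u"
proof -
  have hom: "\<And>c x. N (c *\<^sub>R x) = \<bar>c\<bar> * N x" using assms unfolding is_norm_def by auto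
  have Nm: "\<And>x. N (- x) = N x" using hom[of "-1"] by simp
  have "{(- u) \<bullet> x |x. N x \<le> 1} = {u \<bullet> x |x. N x \<le> 1}"
  proof (intro equalityI subsetI)
    fix r assume "r \<in> {(- u) \<bullet> x |x. N x \<le> 1}"
    then obtain x where x: "r = (- u) \<bullet> x" "N x \<le> 1" by blast
    then show "r \<in> {u \<bullet> x |x. N x \<le> 1}" using Nm[of x] by (intro CollectI exI[of _ "- x"]) simp
  next
    fix r assume "r \<in> {u \<bullet> x |x. N x \<le> 1}"
    then obtain x where x: "r = u \<bullet> x" "N x \<le> 1" by blast
    then show "r \<in> {(- u) \<bullet> x |x. N x \<le> 1}" using Nm[of x] by (intro CollectI exI[of _ "- x"]) simp
  qed
  then show ?thesis unfolding dual_norm_def by simp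
qed

lemma descent:
  fixes Hr :: "'a::euclidean_space \<Rightarrow> real" and N :: "'a \<Rightarrow> real"
  assumes nrm: "is_norm N" and ap: "\<alpha> > 0"
    and gr: "\<And>y. (Hr has_derivative (\<lambda>d. G y \<bullet> d)) (at y)"
    and lip: "\<And>y u. N (G y - G u) \<le> (1 / \<alpha>) * dual_norm N (y - u)"
  shows "Hr (y + d) \<le> Hr y + G y \<bullet> d + (1 / (2 * \<alpha>)) * (dual_norm N d)\<^sup>2"
proof -
  define D where "D = dual_norm N d"
  have D0: "D \<ge> 0" unfolding D_def by (rule dual_nonneg[OF nrm])
  define c where "c = D\<^sup>2 / (2 * \<alpha>)"
  define \<phi> where "\<phi> t = Hr (y + t *\<^sub>R d) - t * (G y \<bullet> d) - c * t\<^sup>2" for t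
  have "\<phi> 1 \<le> \<phi> 0"
  proof (rule DERIV_nonpos_imp_nonincreasing[of 0 1 \<phi>])
    fix t :: real assume t: "0 \<le> t" "t \<le> 1"
    have d1: "((\<lambda>t. Hr (y + t *\<^sub>R d)) has_real_derivative (G (y + t *\<^sub>R d) \<bullet> d)) (at t)"
    proof -
      have "((\<lambda>t. y + t *\<^sub>R d) has_derivative (\<lambda>s. s *\<^sub>R d)) (at t)"
        by (auto intro!: derivative_eq_intros)
      from has_derivative_compose[OF this gr]
      have "((\<lambda>t. Hr (y + t *\<^sub>R d)) has_derivative (\<lambda>s. G (y + t *\<^sub>R d) \<bullet> (s *\<^sub>R d))) (at t)" .
      moreover have "(\<lambda>s. G (y + t *\<^sub>R d) \<bullet> (s *\<^sub>R d)) = (*) (G (y + t *\<^sub>R d) \<bullet> d)"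
        by (auto simp: fun_eq_iff)
      ultimately show ?thesis by (simp add: has_field_derivative_def)
    qed
    have "(\<phi> has_real_derivative (G (y + t *\<^sub>R d) \<bullet> d - G y \<bullet> d - c * (2 * t))) (at t)"
      unfolding \<phi>_def[abs_def]
      by (auto intro!: derivative_eq_intros d1)
    moreover have "G (y + t *\<^sub>R d) \<bullet> d - G y \<bullet> d - c * (2 * t) \<le> 0"
    proof -
      have "(G (y + t *\<^sub>R d) - G y) \<bullet> d \<le> N (G (y + t *\<^sub>R d) - G y) * D"
        unfolding D_def by (rule dual_ineq[OF nrm])
      also have "\<dots> \<le> ((1 / \<alpha>) * (t * D)) * D"
      proof (rule mult_right_mono[OF _ D0])
        have "N (G (y + t *\<^sub>R d) - G y) \<le> (1 / \<alpha>) * dual_norm N (t *\<^sub>R d)"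
          using lip[of "y + t *\<^sub>R d" y] by simp
        also have "\<dots> \<le> (1 / \<alpha>) * (t * D)"
          unfolding D_def using dual_scale[OF nrm t(1), of d] ap by (simp add: divide_right_mono)
        finally show "N (G (y + t *\<^sub>R d) - G y) \<le> (1 / \<alpha>) * (t * D)" .
      qed
      also have "\<dots> = c * (2 * t)" unfolding c_def using ap by (simp add: power2_eq_square)
      finally have "(G (y + t *\<^sub>R d) - G y) \<bullet> d \<le> c * (2 * t)" .
      moreover have "(G (y + t *\<^sub>R d) - G y) \<bullet> d = G (y + t *\<^sub>R d) \<bullet> d - G y \<bullet> d"
        by (simp add: inner_diff_left)
      ultimately show ?thesis by linarith
    qed
    ultimately show "\<exists>y. (\<phi> has_real_derivative y) (at t) \<and> y \<le> 0" by (intro exI conjI)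
  qed simp
  moreover have "\<phi> 1 = Hr (y + d) - G y \<bullet> d - c" unfolding \<phi>_def by simp
  moreover have "\<phi> 0 = Hr y" unfolding \<phi>_def by simp
  ultimately have h: "Hr (y + d) \<le> Hr y + G y \<bullet> d + c" by linarith
  have e: "1 / (2 * \<alpha>) * (dual_norm N d)\<^sup>2 = c" unfolding c_def D_def by simp
  show ?thesis unfolding e by (rule h)
qed


theorem lemmaB3:
  fixes N :: "'a::euclidean_space \<Rightarrow> real"
    and f :: "'a \<Rightarrow> real" and Df :: "'a \<Rightarrow> 'a"
    and h w :: "'a \<Rightarrow> ereal"
    and L \<alpha> :: real
    and G :: "'a \<Rightarrow> 'a"
    and z zb :: "nat \<Rightarrow> 'a"
  assumes norm: "is_norm N"
    and f_convex: "convex_on UNIV f"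
    and f_grad: "\<And>x. (f has_derivative (\<lambda>d. Df x \<bullet> d)) (at x)"
    and L_pos: "L > 0"
    and f_smooth: "\<And>x y. dual_norm N (Df x - Df y) \<le> L * N (x - y)"
    and h_closed: "closed_fun h" and h_proper: "proper_fun h" and h_convex: "econvex h"
    and h_dom: "bounded (edom h)"
    and w_nonneg: "\<And>x. w x \<ge> 0"
    and w_closed: "closed_fun w"
    and w_sc: "strongly_convex_on (edom h) N 1 w"
    and w_bdd: "\<exists>M::real. \<forall>x\<in>edom h. w x \<le> ereal M"
    and alpha_pos: "\<alpha> > 0"
    \<comment> \<open>standing facts from the context: (h^\<alpha>)^* is finite, differentiable with
        gradient G which is (1/\<alpha>)-Lipschitz w.r.t. the dual norm, and f^* is
        (1/L)-strongly convex w.r.t. the dual norm\<close>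
    and hconj_finite: "\<And>y. \<bar>conj (\<lambda>x. h x + ereal \<alpha> * w x) y\<bar> \<noteq> \<infinity>"
    and hconj_grad: "\<And>y. ((\<lambda>u. real_of_ereal (conj (\<lambda>x. h x + ereal \<alpha> * w x) u))
                         has_derivative (\<lambda>d. G y \<bullet> d)) (at y)"
    and hconj_lip: "\<And>y u. N (G y - G u) \<le> (1 / \<alpha>) * dual_norm N (y - u)"
    and fconj_sc: "strongly_convex_on UNIV (dual_norm N) (1 / L) (conj (\<lambda>x. ereal (f x)))"
    \<comment> \<open>GCG iteration\<close>
    and z0: "z 0 \<in> edom (conj (\<lambda>x. ereal (f x)))"
    and zb_argmin: "\<And>k v. ereal ((- G (- z k)) \<bullet> zb k) + conj (\<lambda>x. ereal (f x)) (zb k)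
                       \<le> ereal ((- G (- z k)) \<bullet> v) + conj (\<lambda>x. ereal (f x)) v"
    and z_step: "\<And>k. z (Suc k) = (\<alpha> / (L + \<alpha>)) *\<^sub>R zb k + (1 - \<alpha> / (L + \<alpha>)) *\<^sub>R z k"
  shows "\<forall>k. conj (\<lambda>x. h x + ereal \<alpha> * w x) (- z (Suc k)) + conj (\<lambda>x. ereal (f x)) (z (Suc k))
           \<le> conj (\<lambda>x. h x + ereal \<alpha> * w x) (- z k) + conj (\<lambda>x. ereal (f x)) (z k)
             - ereal (\<alpha> / (L + \<alpha>)) *
               (SUP v. ereal ((- G (- z k)) \<bullet> (z k - v)) + conj (\<lambda>x. ereal (f x)) (z k)
                        - conj (\<lambda>x. ereal (f x)) v)"
proof -
  define F where "F = conj (\<lambda>x. ereal (f x))"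
  define Hc where "Hc = conj (\<lambda>x. h x + ereal \<alpha> * w x)"
  define Hr where "Hr u = real_of_ereal (Hc u)" for u
  define \<eta> where "\<eta> = \<alpha> / (L + \<alpha>)"
  have eta0: "0 < \<eta>" and eta1: "\<eta> < 1" unfolding \<eta>_def using alpha_pos L_pos by auto
  have Hc_eq: "Hc u = ereal (Hr u)" for u
    unfolding Hr_def Hc_def using hconj_finite[of u] by (simp add: ereal_real')
  have Hr_grad: "(Hr has_derivative (\<lambda>d. G y \<bullet> d)) (at y)" for y
    using hconj_grad[of y] unfolding Hr_def Hc_def .
  have F_lb: "F v \<noteq> -\<infinity>" for v
  proof -
    have "ereal (v \<bullet> 0) - ereal (f 0) \<le> F v" unfolding F_def conj_def
      by (rule SUP_upper2[of 0]) auto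
    then show ?thesis by auto
  qed
  have eta_id: "\<eta>\<^sup>2 / \<alpha> = \<eta> * (1 - \<eta>) / L"
  proof -
    have p: "L + \<alpha> \<noteq> 0" using alpha_pos L_pos by simp
    have "1 - \<alpha> / (L + \<alpha>) = L / (L + \<alpha>)" using p by (simp add: field_simps)
    then show ?thesis unfolding \<eta>_def using alpha_pos L_pos p by (simp add: power2_eq_square)
  qed
  have zS: "z (Suc k) = \<eta> *\<^sub>R zb k + (1 - \<eta>) *\<^sub>R z k" for k
    unfolding \<eta>_def by (rule z_step)
  have step: "F (z (Suc k)) \<noteq> \<infinity> \<and>
      Hc (- z (Suc k)) + F (z (Suc k)) \<le> Hc (- z k) + F (z k) - ereal \<eta> *
        (SUP v. ereal ((- G (- z k)) \<bullet> (z k - v)) + F (z k) - F v)"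
    if fin: "F (z k) \<noteq> \<infinity>" for k
  proof -
    define g where "g = - G (- z k)"
    define a where "a = real_of_ereal (F (z k))"
    have Fa: "F (z k) = ereal a" unfolding a_def using fin F_lb[of "z k"]
      by (cases "F (z k)") auto
    have am: "ereal (g \<bullet> zb k) + F (zb k) \<le> ereal (g \<bullet> v) + F v" for v
      using zb_argmin[of k v] unfolding g_def F_def .
    have "F (zb k) \<noteq> \<infinity>" using am[of "z k"] Fa by auto
    then obtain b where Fb: "F (zb k) = ereal b" using F_lb[of "zb k"] by (cases "F (zb k)") auto
    have ab: "g \<bullet> zb k + b \<le> g \<bullet> z k + a" using am[of "z k"] Fa Fb by simp
    define D where "D = dual_norm N (zb k - z k)"
    define c1 where "c1 = \<eta> * b + (1 - \<eta>) * a - 1 / L / 2 * \<eta> * (1 - \<eta>) * D\<^sup>2"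
    have "F (z (Suc k)) \<le> ereal \<eta> * F (zb k) + ereal (1 - \<eta>) * F (z k)
          - ereal (1 / L / 2 * \<eta> * (1 - \<eta>) * (dual_norm N (zb k - z k))\<^sup>2)"
      using fconj_sc eta0 eta1 unfolding strongly_convex_on_def zS F_def by auto
    then have Fs: "F (z (Suc k)) \<le> ereal c1" unfolding Fa Fb c1_def D_def by simp
    then have finS: "F (z (Suc k)) \<noteq> \<infinity>" by auto
    define s where "s = g \<bullet> (z k - zb k) + a - b"
    have S: "(SUP v. ereal (g \<bullet> (z k - v)) + F (z k) - F v) = ereal s"
    proof (rule antisym)
      show "(SUP v. ereal (g \<bullet> (z k - v)) + F (z k) - F v) \<le> ereal s"
      proof (rule SUP_least)
        fix v
        show "ereal (g \<bullet> (z k - v)) + F (z k) - F v \<le> ereal s"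
        proof (cases "F v")
          case (real r)
          have "g \<bullet> zb k + b \<le> g \<bullet> v + r" using am[of v] Fb real by simp
          then show ?thesis unfolding Fa real s_def by (simp add: inner_diff_right)
        next
          case PInf then show ?thesis unfolding Fa by simp
        next
          case MInf then show ?thesis using F_lb by simp
        qed
      qed
      show "ereal s \<le> (SUP v. ereal (g \<bullet> (z k - v)) + F (z k) - F v)"
        by (rule SUP_upper2[of "zb k"]) (auto simp: Fa Fb s_def)
    qed
    define dd where "dd = \<eta> *\<^sub>R (z k - zb k)"
    have dd_eq: "- z (Suc k) = - z k + dd" unfolding dd_def zS by (simp add: algebra_simps)
    have desc: "Hr (- z (Suc k)) \<le> Hr (- z k) + G (- z k) \<bullet> dd + (1 / (2 * \<alpha>)) * (dual_norm N dd)\<^sup>2"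
      unfolding dd_eq by (rule descent[OF norm alpha_pos Hr_grad hconj_lip])
    have "dual_norm N dd \<le> \<eta> * dual_norm N (z k - zb k)"
      unfolding dd_def using dual_scale[OF norm, of \<eta>] eta0 by simp
    also have "dual_norm N (z k - zb k) = D"
      unfolding D_def using dual_neg[OF norm, of "zb k - z k"] by simp
    finally have E: "dual_norm N dd \<le> \<eta> * D" .
    have E2: "(dual_norm N dd)\<^sup>2 \<le> (\<eta> * D)\<^sup>2"
      by (rule power_mono[OF E dual_nonneg[OF norm]])
    have E3: "(1 / (2 * \<alpha>)) * (dual_norm N dd)\<^sup>2 \<le> 1 / L / 2 * \<eta> * (1 - \<eta>) * D\<^sup>2"
    proof -
      have "(1 / (2 * \<alpha>)) * (dual_norm N dd)\<^sup>2 \<le> (1 / (2 * \<alpha>)) * (\<eta> * D)\<^sup>2"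
        using E2 alpha_pos by (simp add: divide_right_mono)
      also have "\<dots> = (\<eta>\<^sup>2 / \<alpha>) * D\<^sup>2 / 2" by (simp add: power_mult_distrib)
      also have "\<dots> = 1 / L / 2 * \<eta> * (1 - \<eta>) * D\<^sup>2" unfolding eta_id by simp
      finally show ?thesis .
    qed
    have gd: "G (- z k) \<bullet> dd = - (\<eta> * (g \<bullet> (z k - zb k)))" unfolding dd_def g_def by simp
    have real_ineq: "Hr (- z (Suc k)) + c1 \<le> Hr (- z k) + a - \<eta> * s"
    proof -
      have "Hr (- z (Suc k)) \<le> Hr (- z k) - \<eta> * (g \<bullet> (z k - zb k)) + 1 / L / 2 * \<eta> * (1 - \<eta>) * D\<^sup>2"
        using desc E3 gd by linarith
      moreover have "\<eta> * s = \<eta> * (g \<bullet> (z k - zb k)) + \<eta> * a - \<eta> * b" unfolding s_def by (simp add: algebra_simps)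
      moreover have "(1 - \<eta>) * a = a - \<eta> * a" by (simp add: algebra_simps)
      ultimately show ?thesis unfolding c1_def by linarith
    qed
    have "Hc (- z (Suc k)) + F (z (Suc k)) \<le> ereal (Hr (- z (Suc k))) + ereal c1"
      unfolding Hc_eq using Fs by (rule add_left_mono)
    also have "\<dots> \<le> ereal (Hr (- z k) + a - \<eta> * s)" using real_ineq by simp
    also have "\<dots> = Hc (- z k) + F (z k) - ereal \<eta> *
        (SUP v. ereal ((- G (- z k)) \<bullet> (z k - v)) + F (z k) - F v)"
      unfolding Hc_eq Fa[symmetric] unfolding g_def[symmetric] S unfolding Fa by simp
    finally show ?thesis using finS by blast
  qed
  have allfin: "F (z k) \<noteq> \<infinity>" for k
  proof (induction k)
    case 0 then show ?case using z0 unfolding edom_def F_def by auto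
  next
    case (Suc k) then show ?case using step by blast
  qed
  show ?thesis using step[OF allfin] unfolding F_def Hc_def \<eta>_def by blast
qed

end
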